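(* Suppose the reals $e^1_{j,n},e^2_{j,n},v_{j,n}$ ($0\le j\le J$, $1\le n\le N$) and $d^1_{j,n},d^2_{j,n}$ ($0\le j\le J$, $1\le n\le N-1$) satisfy constraints (ii) and (iii) of the context. Let $\bar e^1_n,\bar e^2_n,\bar v_n$ be the linear interpolations on $[0,x_J]$ of $(e^1_{j,n})_j,(e^2_{j,n})_j,(v_{j,n})_j$, and $\tilde d^1_n,\tilde d^2_n$ the mixed interpolations of $(d^1_{j,n})_j,(d^2_{j,n})_j$. Then for all $1\le n\le N-1$ and all $0\le x,y\le x_J$, \[ \bar e^1_n(x)+\bar e^2_{n+1}(y)+(y-x)\tilde d^1_n(x)\ge0, \] \[ \bar e^1_n(x)+\bar e^2_{n+1}(y)+(y-x)\tilde d^2_n(x)-\bar v_n(x)+\bar v_{n+1}(y)\ge0. \]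
   Context: Let $0=x_0<x_1<\dots<x_J$ and $N\ge1$. Constraints: (ii) $e^1_{j,n}+e^2_{k,n+1}+(x_k-x_j)d^1_{j,n}\ge0$ and (iii) $e^1_{j,n}+e^2_{k,n+1}+(x_k-x_j)d^2_{j,n}-v_{j,n}+v_{k,n+1}\ge0$ for all $0\le j,k\le J$, $1\le n\le N-1$. Linear interpolation of $(h_j)_{0\le j\le J}$: $\bar h(x)=\frac{x_{j+1}-x}{x_{j+1}-x_j}h_j+\frac{x-x_j}{x_{j+1}-x_j}h_{j+1}$ for $x_j\le x\le x_{j+1}$, $0\le j<J$. Mixed interpolation: for $\delta\in\{1,2\}$ and $1\le n\le N-1$ let $u^1_{j,n}=\frac{e^1_{j+1,n}-e^1_{j,n}}{x_{j+1}-x_j}$ and $u^2_{j,n}=\frac{(e^1_{j+1,n}-v_{j+1,n})-(e^1_{j,n}-v_{j,n})}{x_{j+1}-x_j}$. Define $\tilde d^\delta_n(x_j)=d^\delta_{j,n}$ and, for $x\in(x_j,x_{j+1})$: $\tilde d^\delta_n(x)=d^\delta_{j,n}$ if $d^\delta_{j,n}\le u^\delta_{j,n}$; $\tilde d^\delta_n(x)=d^\delta_{j+1,n}$ if $d^\delta_{j,n}>u^\delta_{j,n}$ and $d^\delta_{j+1,n}\ge u^\delta_{j,n}$; $\tilde d^\delta_n(x)=u^\delta_{j,n}$ if $d^\delta_{j+1,n}<u^\delta_{j,n}<d^\delta_{j,n}$. *)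

theory Defs
  imports "HOL-Analysis.Analysis"
begin

text \<open>On a cell [xs j, xs (j+1)] it is the affine interpolant; at shared nodes both
  formulas agree, so any choice of cell containing x gives the same value.\<close>
definition lin_interp :: "(nat \<Rightarrow> real) \<Rightarrow> nat \<Rightarrow> (nat \<Rightarrow> real) \<Rightarrow> real \<Rightarrow> real" where
  "lin_interp xs J h x =
     (if \<exists>j\<le>J. x = xs j then h (SOME j. j \<le> J \<and> x = xs j) else
      let j = (SOME j. j < J \<and> xs j \<le> x \<and> x \<le> xs (Suc j)) in
        (xs (Suc j) - x) / (xs (Suc j) - xs j) * h j
      + (x - xs j) / (xs (Suc j) - xs j) * h (Suc j))"

definition mixed_interp :: "(nat \<Rightarrow> real) \<Rightarrow> nat \<Rightarrow> (nat \<Rightarrow> real) \<Rightarrow> (nat \<Rightarrow> real) \<Rightarrow> real \<Rightarrow> real" where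
  "mixed_interp xs J d u x =
     (if \<exists>j\<le>J. x = xs j then d (SOME j. j \<le> J \<and> x = xs j)
      else (let j = (SOME j. j < J \<and> xs j < x \<and> x < xs (Suc j)) in
              if d j \<le> u j then d j
              else if u j \<le> d (Suc j) then d (Suc j)
              else u j))"

end

theory Submission
  imports Defs
begin

lemma xs_strict:
  assumes xmono: "\<And>j. j < J \<Longrightarrow> xs j < xs (Suc j)"
  shows "i < j \<Longrightarrow> j \<le> J \<Longrightarrow> (xs i :: real) < xs j"
proof (induction j)
  case 0 then show ?case by simp
next
  case (Suc j)
  then show ?case using xmono[of j] by (cases "i = j") auto
qed

lemma xs_inj:
  assumes xmono: "\<And>j. j < J \<Longrightarrow> xs j < xs (Suc j)"
  shows "i \<le> J \<Longrightarrow> j \<le> J \<Longrightarrow> (xs i :: real) = xs j \<Longrightarrow> i = j"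
  using xs_strict[where J=J and xs=xs, OF xmono, of i j] xs_strict[where J=J and xs=xs, OF xmono, of j i]
  by (metis less_irrefl nat_neq_iff)

lemma lin_node:
  assumes xmono: "\<And>j. j < J \<Longrightarrow> xs j < xs (Suc j)" and k: "k \<le> J"
  shows "lin_interp xs J h (xs k) = h k"
proof -
  have ex: "\<exists>j. j \<le> J \<and> xs k = xs j" using k by blast
  define j where "j = (SOME j. j \<le> J \<and> xs k = xs j)"
  have "j \<le> J \<and> xs k = xs j" unfolding j_def by (rule someI_ex[OF ex])
  then have "j = k" using xs_inj[where J=J and xs=xs, OF xmono, of j k] k by auto
  then show ?thesis unfolding lin_interp_def using k j_def by auto
qed

lemma mixed_node:
  assumes xmono: "\<And>j. j < J \<Longrightarrow> xs j < xs (Suc j)" and k: "k \<le> J"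
  shows "mixed_interp xs J d u (xs k) = d k"
proof -
  have ex: "\<exists>j. j \<le> J \<and> xs k = xs j" using k by blast
  define j where "j = (SOME j. j \<le> J \<and> xs k = xs j)"
  have "j \<le> J \<and> xs k = xs j" unfolding j_def by (rule someI_ex[OF ex])
  then have "j = k" using xs_inj[where J=J and xs=xs, OF xmono, of j k] k by auto
  then show ?thesis unfolding mixed_interp_def using k j_def by auto
qed

lemma not_node:
  assumes xmono: "\<And>j. j < J \<Longrightarrow> xs j < xs (Suc j)"
    and j: "j < J" and x: "xs j < x" "x < (xs (Suc j) :: real)"
  shows "\<not> (\<exists>i\<le>J. x = xs i)"
proof
  assume "\<exists>i\<le>J. x = xs i"
  then obtain i where i: "i \<le> J" "x = xs i" by blast
  show False
  proof (cases "i \<le> j")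
    case True
    then have "xs i \<le> xs j" using xs_strict[where J=J and xs=xs, OF xmono, of i j] j by (cases "i = j") auto
    then show False using i x by simp
  next
    case False
    then have "xs (Suc j) \<le> xs i" using xs_strict[where J=J and xs=xs, OF xmono, of "Suc j" i] i by (cases "i = Suc j") auto
    then show False using i x by simp
  qed
qed

lemma cell_uniq:
  assumes xmono: "\<And>j. j < J \<Longrightarrow> xs j < xs (Suc j)"
    and j: "j < J" and x: "xs j < x" "x < (xs (Suc j) :: real)"
    and i: "i < J" "xs i \<le> x" "x \<le> xs (Suc i)"
  shows "i = j"
proof (rule ccontr)
  assume "i \<noteq> j"
  then consider "i < j" | "j < i" by linarith
  then show False
  proof cases
    case 1
    then have "xs (Suc i) \<le> xs j" using xs_strict[where J=J and xs=xs, OF xmono, of "Suc i" j] j by (cases "Suc i = j") auto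
    then show False using i x by simp
  next
    case 2
    then have "xs (Suc j) \<le> xs i" using xs_strict[where J=J and xs=xs, OF xmono, of "Suc j" i] i by (cases "Suc j = i") auto
    then show False using i x by simp
  qed
qed

lemma lin_cell:
  assumes xmono: "\<And>j. j < J \<Longrightarrow> xs j < xs (Suc j)"
    and j: "j < J" and x: "xs j < x" "x < (xs (Suc j) :: real)"
  shows "lin_interp xs J h x = (xs (Suc j) - x) / (xs (Suc j) - xs j) * h j
      + (x - xs j) / (xs (Suc j) - xs j) * h (Suc j)"
proof -
  have nn: "\<not> (\<exists>i\<le>J. x = xs i)" by (rule not_node[where J=J and xs=xs, OF xmono j x])
  have ex: "\<exists>i. i < J \<and> xs i \<le> x \<and> x \<le> xs (Suc i)" using j x by auto
  define i where "i = (SOME i. i < J \<and> xs i \<le> x \<and> x \<le> xs (Suc i))"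
  have "i < J \<and> xs i \<le> x \<and> x \<le> xs (Suc i)" unfolding i_def by (rule someI_ex[OF ex])
  then have "i = j" using cell_uniq[where J=J and xs=xs, OF xmono j x] by auto
  then show ?thesis unfolding lin_interp_def Let_def if_not_P[OF nn] i_def[symmetric] by simp
qed

lemma mixed_cell:
  assumes xmono: "\<And>j. j < J \<Longrightarrow> xs j < xs (Suc j)"
    and j: "j < J" and x: "xs j < x" "x < (xs (Suc j) :: real)"
  shows "mixed_interp xs J d u x = (if d j \<le> u j then d j
              else if u j \<le> d (Suc j) then d (Suc j) else u j)"
proof -
  have nn: "\<not> (\<exists>i\<le>J. x = xs i)" by (rule not_node[where J=J and xs=xs, OF xmono j x])
  have ex: "\<exists>i. i < J \<and> xs i < x \<and> x < xs (Suc i)" using j x by auto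
  define i where "i = (SOME i. i < J \<and> xs i < x \<and> x < xs (Suc i))"
  have "i < J \<and> xs i < x \<and> x < xs (Suc i)" unfolding i_def by (rule someI_ex[OF ex])
  then have "i = j" using cell_uniq[where J=J and xs=xs, OF xmono j x] by auto
  then show ?thesis unfolding mixed_interp_def Let_def if_not_P[OF nn] i_def[symmetric] by simp
qed

lemma cover:
  "(\<forall>j<J. xs j < xs (Suc j)) \<Longrightarrow> 0 \<le> x \<Longrightarrow> x \<le> xs J \<Longrightarrow> xs 0 = (0::real) \<Longrightarrow>
   (\<exists>k\<le>J. x = xs k) \<or> (\<exists>j<J. xs j < x \<and> x < xs (Suc j))"
proof (induction J)
  case 0 then show ?case by auto
next
  case (Suc J)
  show ?case
  proof (cases "x \<le> xs J")
    case True
    with Suc have "(\<exists>k\<le>J. x = xs k) \<or> (\<exists>j<J. xs j < x \<and> x < xs (Suc j))" by auto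
    then show ?thesis using le_SucI less_SucI by blast
  next
    case False
    show ?thesis
    proof (cases "x = xs (Suc J)")
      case True then show ?thesis by blast
    next
      case F2: False
      have "xs J < x \<and> x < xs (Suc J)" using False F2 Suc.prems by simp
      then show ?thesis by blast
    qed
  qed
qed

lemma lin_diff: "lin_interp xs J (\<lambda>j. a j - b j) x = lin_interp xs J a x - lin_interp xs J b x"
proof (cases "\<exists>j\<le>J. x = xs j")
  case True then show ?thesis unfolding lin_interp_def Let_def if_P[OF True] by simp
next
  case False then show ?thesis unfolding lin_interp_def Let_def if_not_P[OF False]
    by (simp add: algebra_simps diff_divide_distrib add_divide_distrib)
qed

lemma lin_add: "lin_interp xs J (\<lambda>j. a j + b j) x = lin_interp xs J a x + lin_interp xs J b x"
proof (cases "\<exists>j\<le>J. x = xs j")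
  case True then show ?thesis unfolding lin_interp_def Let_def if_P[OF True] by simp
next
  case False then show ?thesis unfolding lin_interp_def Let_def if_not_P[OF False]
    by (simp add: algebra_simps diff_divide_distrib add_divide_distrib)
qed

lemma yred:
  assumes xmono: "\<And>j. j < J \<Longrightarrow> xs j < xs (Suc j)" and x0: "xs 0 = 0"
    and P: "\<And>k. k \<le> J \<Longrightarrow> A + E2 k + (xs k - x) * D \<ge> 0"
    and y: "0 \<le> y" "y \<le> xs J"
  shows "A + lin_interp xs J E2 y + (y - x) * D \<ge> (0::real)"
proof -
  have "(\<exists>k\<le>J. y = xs k) \<or> (\<exists>j<J. xs j < y \<and> y < xs (Suc j))"
    using cover[of J xs y] xmono y x0 by auto
  then show ?thesis
  proof
    assume "\<exists>k\<le>J. y = xs k"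
    then obtain k where "k \<le> J" "y = xs k" by blast
    then show ?thesis using lin_node[where J=J and xs=xs, OF xmono] P by simp
  next
    assume "\<exists>j<J. xs j < y \<and> y < xs (Suc j)"
    then obtain j where j: "j < J" "xs j < y" "y < xs (Suc j)" by blast
    define a where "a = xs j"
    define b where "b = xs (Suc j)"
    have ab: "a < b" using j a_def b_def by simp
    have p0: "A + E2 j + (a - x) * D \<ge> 0" using P[of j] j a_def by simp
    have p1: "A + E2 (Suc j) + (b - x) * D \<ge> 0" using P[of "Suc j"] j b_def by simp
    have hne: "b - a \<noteq> 0" using ab by simp
    define t where "t = (y - a) / (b - a)"
    have t1: "(b - y) / (b - a) = 1 - t" unfolding t_def using hne
      by (simp add: field_simps)
    have t2: "y = a + t * (b - a)" unfolding t_def using hne by simp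
    have t0: "0 \<le> t" "t \<le> 1" unfolding t_def using ab j a_def b_def by auto
    have eq: "A + ((b - y) / (b - a) * E2 j + (y - a) / (b - a) * E2 (Suc j)) + (y - x) * D
       = (1 - t) * (A + E2 j + (a - x) * D) + t * (A + E2 (Suc j) + (b - x) * D)"
      unfolding t1 t_def[symmetric] by (subst t2) (simp add: algebra_simps)
    have "(1 - t) * (A + E2 j + (a - x) * D) + t * (A + E2 (Suc j) + (b - x) * D) \<ge> 0"
    proof -
      have "(1 - t) * (A + E2 j + (a - x) * D) \<ge> 0" using t0 p0 by simp
      moreover have "t * (A + E2 (Suc j) + (b - x) * D) \<ge> 0" using t0 p1 by simp
      ultimately show ?thesis by linarith
    qed
    then show ?thesis using eq lin_cell[where J=J and xs=xs, OF xmono j] a_def b_def by simp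
  qed
qed

lemma cellx:
  fixes a b x e0 e1 e2 c d0 d1 u :: real
  assumes ax: "a < x" and xb: "x < b" and u: "u = (e1 - e0) / (b - a)"
    and ii0: "e0 + e2 + (c - a) * d0 \<ge> 0"
    and ii1: "e1 + e2 + (c - b) * d1 \<ge> 0"
    and c: "c \<le> a \<or> b \<le> c"
  shows "(b - x) / (b - a) * e0 + (x - a) / (b - a) * e1 + e2 + (c - x) *
     (if d0 \<le> u then d0 else if u \<le> d1 then d1 else u) \<ge> 0"
proof -
  define h where "h = b - a"
  have h: "h > 0" using ax xb h_def by simp
  have hne: "b - a \<noteq> 0" using ax xb by simp
  have "(b - a) * u = e1 - e0" using hne unfolding u by simp
  then have e1': "e1 = e0 + (b - a) * u" by simp
  then have e1: "e1 = e0 + h * u" using h_def by simp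
  define t where "t = (x - a) / (b - a)"
  have t1: "(b - x) / (b - a) = 1 - t" unfolding t_def using hne
    by (simp add: field_simps)
  have t2: "t * (b - a) = x - a" unfolding t_def using hne by simp
  have L: "(b - x) / (b - a) * e0 + (x - a) / (b - a) * e1 = e0 + (x - a) * u"
  proof -
    have t3: "t * (b - a) * u = (x - a) * u" using t2 by simp
    show ?thesis unfolding t1 t_def[symmetric] e1' using t3 by (simp add: algebra_simps)
  qed
  have bb: "b = a + h" using h_def by simp
  show ?thesis
  proof (cases "d0 \<le> u")
    case True
    have "e0 + (x - a) * u + e2 + (c - x) * d0 = (e0 + e2 + (c - a) * d0) + (x - a) * (u - d0)"
      by (simp add: algebra_simps)
    moreover have "(x - a) * (u - d0) \<ge> 0" using True ax by simp
    ultimately show ?thesis using L True ii0 by simp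
  next
    case F: False
    show ?thesis
    proof (cases "u \<le> d1")
      case True
      have "e0 + (x - a) * u + e2 + (c - x) * d1 = (e1 + e2 + (c - b) * d1) + (b - x) * (d1 - u)"
        using e1 bb by (simp add: algebra_simps)
      moreover have "(b - x) * (d1 - u) \<ge> 0" using True xb by simp
      ultimately show ?thesis using L True F ii1 by simp
    next
      case False
      have eq: "e0 + (x - a) * u + e2 + (c - x) * u = e0 + e2 + (c - a) * u"
        by (simp add: algebra_simps)
      have "e0 + e2 + (c - a) * u \<ge> 0"
        using c
      proof
        assume "c \<le> a"
        have "e0 + e2 + (c - a) * u = (e0 + e2 + (c - a) * d0) + (a - c) * (d0 - u)"
          by (simp add: algebra_simps)
        moreover have "(a - c) * (d0 - u) \<ge> 0" using F \<open>c \<le> a\<close> by simp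
        ultimately show ?thesis using ii0 by simp
      next
        assume "b \<le> c"
        have "e0 + e2 + (c - a) * u = (e1 + e2 + (c - b) * d1) + (c - b) * (u - d1)"
          using e1 bb by (simp add: algebra_simps)
        moreover have "(c - b) * (u - d1) \<ge> 0" using False \<open>b \<le> c\<close> by simp
        ultimately show ?thesis using ii1 by simp
      qed
      then show ?thesis using L F False eq by simp
    qed
  qed
qed

lemma key:
  assumes xmono: "\<And>j. j < J \<Longrightarrow> xs j < xs (Suc j)" and x0: "xs 0 = 0"
    and ii: "\<And>j k. j \<le> J \<Longrightarrow> k \<le> J \<Longrightarrow> Ea j + Eb k + (xs k - xs j) * d j \<ge> 0"
    and x: "0 \<le> x" "x \<le> xs J" and y: "0 \<le> y" "y \<le> xs J"
  shows "lin_interp xs J Ea x + lin_interp xs J Eb y + (y - x) *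
     mixed_interp xs J d (\<lambda>j. (Ea (Suc j) - Ea j) / (xs (Suc j) - xs j)) x \<ge> (0::real)"
proof -
  have "(\<exists>k\<le>J. x = xs k) \<or> (\<exists>j<J. xs j < x \<and> x < xs (Suc j))"
    using cover[of J xs x] xmono x x0 by auto
  then show ?thesis
  proof
    assume "\<exists>k\<le>J. x = xs k"
    then obtain j where j: "j \<le> J" "x = xs j" by blast
    show ?thesis using j lin_node[where J=J and xs=xs, OF xmono j(1)] mixed_node[where J=J and xs=xs, OF xmono j(1)]
      by (simp, intro yred[where J=J and xs=xs, OF xmono x0 _ y]) (use ii j in auto)
  next
    assume "\<exists>j<J. xs j < x \<and> x < xs (Suc j)"
    then obtain j where j: "j < J" "xs j < x" "x < xs (Suc j)" by blast
    have "\<And>k. k \<le> J \<Longrightarrow> lin_interp xs J Ea x + Eb k + (xs k - x) *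
     mixed_interp xs J d (\<lambda>j. (Ea (Suc j) - Ea j) / (xs (Suc j) - xs j)) x \<ge> 0"
    proof -
      fix k assume k: "k \<le> J"
      have c: "xs k \<le> xs j \<or> xs (Suc j) \<le> xs k"
      proof (cases "k \<le> j")
        case True then show ?thesis using xs_strict[where J=J and xs=xs, OF xmono, of k j] j by (cases "k = j") auto
      next
        case False then show ?thesis using xs_strict[where J=J and xs=xs, OF xmono, of "Suc j" k] k by (cases "k = Suc j") auto
      qed
      show "lin_interp xs J Ea x + Eb k + (xs k - x) *
     mixed_interp xs J d (\<lambda>j. (Ea (Suc j) - Ea j) / (xs (Suc j) - xs j)) x \<ge> 0"
      proof -
        have h0: "0 \<le> Ea j + Eb k + (xs k - xs j) * d j" using ii[of j k] j k by simp
        have h1: "0 \<le> Ea (Suc j) + Eb k + (xs k - xs (Suc j)) * d (Suc j)" using ii[of "Suc j" k] j k by simp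
        note C = cellx[OF j(2) j(3) refl h0 h1 c]
        show ?thesis using C by (simp add: lin_cell[where J=J and xs=xs, OF xmono j] mixed_cell[where J=J and xs=xs, OF xmono j])
      qed
    qed
    then show ?thesis by (intro yred[where J=J and xs=xs, OF xmono x0 _ y])
  qed
qed

theorem mainTheorem7:
  fixes xs :: "nat \<Rightarrow> real" and J N :: nat
    and e1 e2 v d1 d2 :: "nat \<Rightarrow> nat \<Rightarrow> real"
  assumes x0: "xs 0 = 0"
    and xmono: "\<And>j. j < J \<Longrightarrow> xs j < xs (Suc j)"
    and N1: "N \<ge> 1"
    and ii: "\<And>j k n. j \<le> J \<Longrightarrow> k \<le> J \<Longrightarrow> 1 \<le> n \<Longrightarrow> n \<le> N - 1 \<Longrightarrow>
               e1 j n + e2 k (n + 1) + (xs k - xs j) * d1 j n \<ge> 0"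
    and iii: "\<And>j k n. j \<le> J \<Longrightarrow> k \<le> J \<Longrightarrow> 1 \<le> n \<Longrightarrow> n \<le> N - 1 \<Longrightarrow>
               e1 j n + e2 k (n + 1) + (xs k - xs j) * d2 j n - v j n + v k (n + 1) \<ge> 0"
    and n: "1 \<le> n" "n \<le> N - 1"
    and x: "0 \<le> x" "x \<le> xs J"
    and y: "0 \<le> y" "y \<le> xs J"
  shows "lin_interp xs J (\<lambda>j. e1 j n) x + lin_interp xs J (\<lambda>j. e2 j (n + 1)) y
           + (y - x) * mixed_interp xs J (\<lambda>j. d1 j n)
                 (\<lambda>j. (e1 (Suc j) n - e1 j n) / (xs (Suc j) - xs j)) x \<ge> 0
       \<and> lin_interp xs J (\<lambda>j. e1 j n) x + lin_interp xs J (\<lambda>j. e2 j (n + 1)) y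
           + (y - x) * mixed_interp xs J (\<lambda>j. d2 j n)
                 (\<lambda>j. ((e1 (Suc j) n - v (Suc j) n) - (e1 j n - v j n)) / (xs (Suc j) - xs j)) x
           - lin_interp xs J (\<lambda>j. v j n) x + lin_interp xs J (\<lambda>j. v j (n + 1)) y \<ge> 0"
proof
  show "lin_interp xs J (\<lambda>j. e1 j n) x + lin_interp xs J (\<lambda>j. e2 j (n + 1)) y
           + (y - x) * mixed_interp xs J (\<lambda>j. d1 j n)
                 (\<lambda>j. (e1 (Suc j) n - e1 j n) / (xs (Suc j) - xs j)) x \<ge> 0"
    by (rule key[where Ea="\<lambda>j. e1 j n", OF xmono x0 _ x y]) (use ii n in auto)
  have K: "lin_interp xs J (\<lambda>j. e1 j n - v j n) x + lin_interp xs J (\<lambda>j. e2 j (n + 1) + v j (n + 1)) y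
           + (y - x) * mixed_interp xs J (\<lambda>j. d2 j n)
                 (\<lambda>j. ((e1 (Suc j) n - v (Suc j) n) - (e1 j n - v j n)) / (xs (Suc j) - xs j)) x \<ge> 0"
  proof (rule key[where Ea="\<lambda>j. e1 j n - v j n", OF xmono x0 _ x y])
    fix j k assume "j \<le> J" "k \<le> J"
    then show "0 \<le> e1 j n - v j n + (e2 k (n + 1) + v k (n + 1)) + (xs k - xs j) * d2 j n"
      using iii[of j k n] n by simp
  qed
  then show "lin_interp xs J (\<lambda>j. e1 j n) x + lin_interp xs J (\<lambda>j. e2 j (n + 1)) y
           + (y - x) * mixed_interp xs J (\<lambda>j. d2 j n)
                 (\<lambda>j. ((e1 (Suc j) n - v (Suc j) n) - (e1 j n - v j n)) / (xs (Suc j) - xs j)) x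
           - lin_interp xs J (\<lambda>j. v j n) x + lin_interp xs J (\<lambda>j. v j (n + 1)) y \<ge> 0"
    unfolding lin_diff lin_add by simp
qed

end
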